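(* Consider the setting described in the context, with distinct treatments $s\neq t$. Assume (C1), (C2), (C3), that $X$ and $XY^{(\ell)}$, $\ell=1,\dots,k$, have finite second-order moments, and that ${\rm var}(X\mid Z=z)$ is positive definite for every $z\in\mathcal Z$. Let $\beta_\ell(z)=\{{\rm var}(X\mid Z=z)\}^{-1}{\rm cov}(X,Y^{(\ell)}\mid Z=z)$, $\beta(z)=\sum_{\ell=1}^k\pi_\ell\beta_\ell(z)$, and \begin{align*} \sigma_U^2&=E\{{\rm var}(Y^{(t)}\mid Z)/\pi_t+{\rm var}(Y^{(s)}\mid Z)/\pi_s\},\\ \sigma_A^2&=E[{\rm var}\{Y^{(t)}-X^T\beta_t(Z)\mid Z\}/\pi_t+{\rm var}\{Y^{(s)}-X^T\beta_s(Z)\mid Z\}/\pi_s]+E[\{\beta_t(Z)-\beta_s(Z)\}^T{\rm var}(X\mid Z)\{\beta_t(Z)-\beta_s(Z)\}],\\ \sigma_B^2&=E[{\rm var}\{Y^{(t)}-X^T\beta(Z)\mid Z\}/\pi_t+{\rm var}\{Y^{(s)}-X^T\beta(Z)\mid Z\}/\pi_s]. \end{align*} Then \begin{align*} \sigma_U^2-\sigma_A^2=&\,E\big[\{\pi_s\beta_t(Z)+\pi_t\beta_s(Z)\}^T{\rm var}(X\mid Z)\{\pi_s\beta_t(Z)+\pi_t\beta_s(Z)\}\big]\{\pi_t\pi_s(\pi_t+\pi_s)\}^{-1}\\ &+E\big[\{\beta_t(Z)-\beta_s(Z)\}^T{\rm var}(X\mid Z)\{\beta_t(Z)-\beta_s(Z)\}\big]\{(\pi_t+\pi_s)^{-1}-1\},\\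 \sigma_B^2-\sigma_A^2=&\,E\big[\{\beta_t(Z)-\beta(Z)\}^T{\rm var}(X\mid Z)\{\beta_t(Z)-\beta(Z)\}\big]\pi_t^{-1}+E\big[\{\beta_s(Z)-\beta(Z)\}^T{\rm var}(X\mid Z)\{\beta_s(Z)-\beta(Z)\}\big]\pi_s^{-1}\\ &-E\big[\{\beta_t(Z)-\beta_s(Z)\}^T{\rm var}(X\mid Z)\{\beta_t(Z)-\beta_s(Z)\}\big]. \end{align*} Consequently $\sigma_A^2\le\sigma_U^2$, with equality if and only if for every $z\in\mathcal Z$: $\pi_s\beta_t(z)+\pi_t\beta_s(z)=0$ and $\{\beta_t(z)-\beta_s(z)\}(1-\pi_t-\pi_s)=0$; and $\sigma_A^2\le\sigma_B^2$, with equality if and only if for every $z\in\mathcal Z$: $\beta(z)=\{\pi_s\beta_t(z)+\pi_t\beta_s(z)\}/(\pi_s+\pi_t)$ and $\{\beta_t(z)-\beta_s(z)\}(1-\pi_t-\pi_s)=0$.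
   Context: Setting: a trial compares $k\ge2$ treatments (fixed) with known assignment proportions $\pi_1,\dots,\pi_k\in(0,1)$, $\sum_t\pi_t=1$. Let $e_t$ be the $t$-th unit vector in $\mathbb R^k$. For patient $i=1,\dots,n$: $I_i\in\{e_1,\dots,e_k\}$ is the treatment indicator, $Y_i^{(1)},\dots,Y_i^{(k)}$ are potential responses, $W_i$ the observed covariate vector, $Z_i$ a discrete function of $W_i$ used in randomization, $X_i$ a vector-valued function of $W_i$. Observed $Y_i=Y_i^{(t)}$ iff $I_i=e_t$. Generic variables $(Y^{(1)},\dots,Y^{(k)},W)$, $Z$, $X$. Conditions: (C1) $(Y_i^{(1)},\dots,Y_i^{(k)},W_i)$, $i=1,\dots,n$, are i.i.d. as $(Y^{(1)},\dots,Y^{(k)},W)$, each $Y^{(t)}$ with finite second moments. (C2) $(I_1,\dots,I_n)$ and $\{(Y_i^{(1)},\dots,Y_i^{(k)},W_i)\}_{i}$ are conditionally independent given $Z_1,\dots,Z_n$. (C3) $Z$ takes finitely many values in $\mathcal Z$; ${\rm pr}(I_i=e_t\mid Z_1,\dots,Z_n)=\pi_t$ for all $t,i$; and for every $z\in\mathcal Z$ and $t$, $D_t(z)/n(z)\to0$ in probability, where $n(z)=\#\{i:Z_i=z\}$, $n_t(z)=\#\{i:Z_i=z,I_i=e_t\}$, $D_t(z)=n_t(z)-\pi_tn(z)$. *)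

theory Defs
  imports "HOL-Probability.Probability"
begin

text \<open>Conditional moments given a discrete variable Z at a value z
  (elementary conditioning on the event Z = z, which has positive probability).\<close>

definition cexp :: "'a measure \<Rightarrow> ('a \<Rightarrow> 'z) \<Rightarrow> 'z \<Rightarrow> ('a \<Rightarrow> real) \<Rightarrow> real" where
  "cexp M Z z V =
     (\<integral>\<omega>. indicator {\<omega>\<in>space M. Z \<omega> = z} \<omega> * V \<omega> \<partial>M) / measure M {\<omega>\<in>space M. Z \<omega> = z}"

definition ccov :: "'a measure \<Rightarrow> ('a \<Rightarrow> 'z) \<Rightarrow> 'z \<Rightarrow> ('a \<Rightarrow> real) \<Rightarrow> ('a \<Rightarrow> real) \<Rightarrow> real" where
  "ccov M Z z U V = cexp M Z z (\<lambda>\<omega>. (U \<omega> - cexp M Z z U) * (V \<omega> - cexp M Z z V))"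

definition cvar :: "'a measure \<Rightarrow> ('a \<Rightarrow> 'z) \<Rightarrow> 'z \<Rightarrow> ('a \<Rightarrow> real) \<Rightarrow> real" where
  "cvar M Z z U = ccov M Z z U U"

definition cvarX :: "'a measure \<Rightarrow> ('a \<Rightarrow> 'z) \<Rightarrow> 'z \<Rightarrow> ('a \<Rightarrow> real^'p) \<Rightarrow> real^'p^'p" where
  "cvarX M Z z X = (\<chi> i j. ccov M Z z (\<lambda>\<omega>. X \<omega> $ i) (\<lambda>\<omega>. X \<omega> $ j))"

definition ccovXY :: "'a measure \<Rightarrow> ('a \<Rightarrow> 'z) \<Rightarrow> 'z \<Rightarrow> ('a \<Rightarrow> real^'p) \<Rightarrow> ('a \<Rightarrow> real) \<Rightarrow> real^'p" where
  "ccovXY M Z z X Y = (\<chi> i. ccov M Z z (\<lambda>\<omega>. X \<omega> $ i) Y)"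

definition betaC :: "'a measure \<Rightarrow> ('a \<Rightarrow> 'z) \<Rightarrow> 'z \<Rightarrow> ('a \<Rightarrow> real^'p) \<Rightarrow> ('a \<Rightarrow> real) \<Rightarrow> real^'p" where
  "betaC M Z z X Y = matrix_inv (cvarX M Z z X) *v ccovXY M Z z X Y"

definition qf :: "real^'p^'p \<Rightarrow> real^'p \<Rightarrow> real" where
  "qf A v = v \<bullet> (A *v v)"

definition pos_def :: "real^'p^'p \<Rightarrow> bool" where
  "pos_def A \<longleftrightarrow> (\<forall>v. v \<noteq> 0 \<longrightarrow> v \<bullet> (A *v v) > 0)"

end

theory Submission
  imports Defs
begin


lemma ind_int:
  fixes f :: "'a \<Rightarrow> real"
  assumes "S \<in> sets M" "integrable M f"
  shows "integrable M (\<lambda>\<omega>. indicator S \<omega> * f \<omega>)"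
  using integrable_real_mult_indicator[OF assms] by (simp add: mult.commute)

lemma cexp_add:
  assumes S: "{\<omega>\<in>space M. Z \<omega> = z} \<in> sets M" and f: "integrable M f" and g: "integrable M g"
  shows "cexp M Z z (\<lambda>\<omega>. f \<omega> + g \<omega>) = cexp M Z z f + cexp M Z z g"
  unfolding cexp_def using ind_int[OF S f] ind_int[OF S g]
  by (simp add: distrib_left add_divide_distrib)

lemma cexp_diff:
  assumes S: "{\<omega>\<in>space M. Z \<omega> = z} \<in> sets M" and f: "integrable M f" and g: "integrable M g"
  shows "cexp M Z z (\<lambda>\<omega>. f \<omega> - g \<omega>) = cexp M Z z f - cexp M Z z g"
  unfolding cexp_def using ind_int[OF S f] ind_int[OF S g]
  by (simp add: right_diff_distrib diff_divide_distrib)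

lemma cexp_cmult:
  "cexp M Z z (\<lambda>\<omega>. c * f \<omega>) = c * cexp M Z z f"
  unfolding cexp_def by (simp add: mult.left_commute)

lemma cexp_sum:
  assumes S: "{\<omega>\<in>space M. Z \<omega> = z} \<in> sets M" and f: "\<And>i. i \<in> I \<Longrightarrow> integrable M (f i)"
  shows "cexp M Z z (\<lambda>\<omega>. \<Sum>i\<in>I. f i \<omega>) = (\<Sum>i\<in>I. cexp M Z z (f i))"
  unfolding cexp_def using ind_int[OF S f]
  by (simp add: sum_distrib_left integral_sum sum_divide_distrib)

lemma cexp_const:
  assumes P: "prob_space M" and S: "{\<omega>\<in>space M. Z \<omega> = z} \<in> sets M"
    and pos: "measure M {\<omega>\<in>space M. Z \<omega> = z} > 0"
  shows "cexp M Z z (\<lambda>\<omega>. c) = c"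
proof -
  interpret prob_space M by fact
  have "(\<integral>\<omega>. indicator {\<omega>\<in>space M. Z \<omega> = z} \<omega> * c \<partial>M) = measure M {\<omega>\<in>space M. Z \<omega> = z} * c"
    using S by (simp add: Int_absorb2 sets.sets_into_space)
  moreover have "{\<omega>\<in>space M. Z \<omega> = z} \<inter> space M = {\<omega>\<in>space M. Z \<omega> = z}" by auto
  ultimately show ?thesis unfolding cexp_def using pos by simp
qed

definition L2 :: "'a measure \<Rightarrow> ('a \<Rightarrow> real) \<Rightarrow> bool" where
  "L2 M f \<longleftrightarrow> f \<in> borel_measurable M \<and> integrable M (\<lambda>\<omega>. (f \<omega>)\<^sup>2)"

lemma L2_int: assumes "prob_space M" "L2 M f" shows "integrable M f"
proof -
  interpret prob_space M by fact
  show ?thesis using assms(2) unfolding L2_def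
    by (auto intro: square_integrable_imp_integrable)
qed

lemma L2_mult: assumes "L2 M f" "L2 M g" shows "integrable M (\<lambda>\<omega>. f \<omega> * g \<omega>)"
proof (rule Bochner_Integration.integrable_bound[where f="\<lambda>\<omega>. (f \<omega>)\<^sup>2 + (g \<omega>)\<^sup>2"])
  show "integrable M (\<lambda>\<omega>. (f \<omega>)\<^sup>2 + (g \<omega>)\<^sup>2)" using assms unfolding L2_def by auto
  show "(\<lambda>\<omega>. f \<omega> * g \<omega>) \<in> borel_measurable M" using assms unfolding L2_def by auto
  show "AE x in M. norm (f x * g x) \<le> norm ((f x)\<^sup>2 + (g x)\<^sup>2)"
  proof (rule AE_I2)
    fix x
    have "\<bar>f x * g x\<bar> \<le> (f x)\<^sup>2 + (g x)\<^sup>2"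
    proof -
      have "0 \<le> (\<bar>f x\<bar> - \<bar>g x\<bar>)\<^sup>2" by simp
      then have "2 * (\<bar>f x\<bar> * \<bar>g x\<bar>) \<le> \<bar>f x\<bar>\<^sup>2 + \<bar>g x\<bar>\<^sup>2" by (simp add: power2_diff)
      moreover have "0 \<le> \<bar>f x\<bar> * \<bar>g x\<bar>" by simp
      ultimately show ?thesis by (simp only: abs_mult power2_abs)
    qed
    then show "norm (f x * g x) \<le> norm ((f x)\<^sup>2 + (g x)\<^sup>2)" by simp
  qed
qed

lemma L2_add: assumes "L2 M f" "L2 M g" shows "L2 M (\<lambda>\<omega>. f \<omega> + g \<omega>)"
proof -
  have "integrable M (\<lambda>\<omega>. (f \<omega>)\<^sup>2 + 2 * (f \<omega> * g \<omega>) + (g \<omega>)\<^sup>2)"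
    using assms L2_mult[OF assms] unfolding L2_def by auto
  moreover have "(\<lambda>\<omega>. (f \<omega> + g \<omega>)\<^sup>2) = (\<lambda>\<omega>. (f \<omega>)\<^sup>2 + 2 * (f \<omega> * g \<omega>) + (g \<omega>)\<^sup>2)"
    by (simp add: power2_sum mult.assoc algebra_simps)
  ultimately show ?thesis using assms unfolding L2_def by auto
qed

lemma L2_cmult: assumes "L2 M f" shows "L2 M (\<lambda>\<omega>. c * f \<omega>)"
  using assms unfolding L2_def by (auto simp: power_mult_distrib)

lemma L2_diff: assumes "L2 M f" "L2 M g" shows "L2 M (\<lambda>\<omega>. f \<omega> - g \<omega>)"
  using L2_add[OF assms(1) L2_cmult[OF assms(2), of "-1"]] by simp

lemma L2_sum: assumes "finite I" "\<And>i. i \<in> I \<Longrightarrow> L2 M (f i)" shows "L2 M (\<lambda>\<omega>. \<Sum>i\<in>I. f i \<omega>)"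
  using assms
proof (induction I rule: finite_induct)
  case empty then show ?case by (simp add: L2_def)
next
  case (insert x F) then show ?case by (simp add: L2_add)
qed

context
  fixes M :: "'a measure" and Z :: "'a \<Rightarrow> 'z" and z :: 'z
  assumes P: "prob_space M" and S: "{\<omega>\<in>space M. Z \<omega> = z} \<in> sets M"
    and pos: "measure M {\<omega>\<in>space M. Z \<omega> = z} > 0"
begin

lemma ccov_alt:
  assumes U: "L2 M U" and V: "L2 M V"
  shows "ccov M Z z U V = cexp M Z z (\<lambda>\<omega>. U \<omega> * V \<omega>) - cexp M Z z U * cexp M Z z V"
proof -
  interpret prob_space M by (rule P)
  define a where "a = cexp M Z z U"
  define b where "b = cexp M Z z V"
  have iU: "integrable M U" and iV: "integrable M V" using L2_int[OF P] U V by auto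
  have iUV: "integrable M (\<lambda>\<omega>. U \<omega> * V \<omega>)" using L2_mult[OF U V] .
  have eq: "(\<lambda>\<omega>. (U \<omega> - a) * (V \<omega> - b)) = (\<lambda>\<omega>. (U \<omega> * V \<omega> - (a * V \<omega> + b * U \<omega>)) + (\<lambda>_. a * b) \<omega>)"
    by (simp add: fun_eq_iff algebra_simps)
  have "ccov M Z z U V = cexp M Z z (\<lambda>\<omega>. (U \<omega> * V \<omega> - (a * V \<omega> + b * U \<omega>)) + (\<lambda>_. a * b) \<omega>)"
    unfolding ccov_def a_def[symmetric] b_def[symmetric] eq ..
  also have "\<dots> = cexp M Z z (\<lambda>\<omega>. U \<omega> * V \<omega> - (a * V \<omega> + b * U \<omega>)) + cexp M Z z (\<lambda>_. a * b)"
    by (rule cexp_add[OF S]) (use iU iV iUV in auto)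
  also have "cexp M Z z (\<lambda>\<omega>. U \<omega> * V \<omega> - (a * V \<omega> + b * U \<omega>)) = cexp M Z z (\<lambda>\<omega>. U \<omega> * V \<omega>) - cexp M Z z (\<lambda>\<omega>. a * V \<omega> + b * U \<omega>)"
    by (rule cexp_diff[OF S]) (use iU iV iUV in auto)
  also have "cexp M Z z (\<lambda>\<omega>. a * V \<omega> + b * U \<omega>) = cexp M Z z (\<lambda>\<omega>. a * V \<omega>) + cexp M Z z (\<lambda>\<omega>. b * U \<omega>)"
    by (rule cexp_add[OF S]) (use iU iV in auto)
  also have "cexp M Z z (\<lambda>_. a * b) = a * b" by (rule cexp_const[OF P S pos])
  also have "cexp M Z z (\<lambda>\<omega>. a * V \<omega>) = a * b" unfolding cexp_cmult b_def ..
  also have "cexp M Z z (\<lambda>\<omega>. b * U \<omega>) = b * a" unfolding cexp_cmult a_def ..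
  finally show ?thesis unfolding a_def b_def by (simp add: algebra_simps)
qed

lemma ccov_sum1:
  assumes I: "finite I" and f: "\<And>i. i \<in> I \<Longrightarrow> L2 M (f i)" and V: "L2 M V"
  shows "ccov M Z z (\<lambda>\<omega>. \<Sum>i\<in>I. c i * f i \<omega>) V = (\<Sum>i\<in>I. c i * ccov M Z z (f i) V)"
proof -
  have L: "L2 M (\<lambda>\<omega>. \<Sum>i\<in>I. c i * f i \<omega>)" by (rule L2_sum[OF I]) (rule L2_cmult, rule f)
  have e1: "(\<lambda>\<omega>. (\<Sum>i\<in>I. c i * f i \<omega>) * V \<omega>) = (\<lambda>\<omega>. \<Sum>i\<in>I. c i * (f i \<omega> * V \<omega>))"
    by (simp add: sum_distrib_right mult.assoc)
  have i1: "\<And>i. i \<in> I \<Longrightarrow> integrable M (\<lambda>\<omega>. c i * (f i \<omega> * V \<omega>))"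
    using L2_mult[OF f V] by auto
  have i2: "\<And>i. i \<in> I \<Longrightarrow> integrable M (\<lambda>\<omega>. c i * f i \<omega>)"
    using L2_int[OF P] f by auto
  have h1: "cexp M Z z (\<lambda>\<omega>. \<Sum>i\<in>I. c i * (f i \<omega> * V \<omega>)) = (\<Sum>i\<in>I. c i * cexp M Z z (\<lambda>\<omega>. f i \<omega> * V \<omega>))"
    using cexp_sum[OF S i1] by (simp add: cexp_cmult)
  have h2: "cexp M Z z (\<lambda>\<omega>. \<Sum>i\<in>I. c i * f i \<omega>) = (\<Sum>i\<in>I. c i * cexp M Z z (f i))"
    using cexp_sum[OF S i2] by (simp add: cexp_cmult)
  show ?thesis
    unfolding ccov_alt[OF L V] e1 h1 h2
    using ccov_alt[OF f V]
    by (simp add: sum_distrib_right right_diff_distrib sum_subtractf mult.assoc)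
qed

lemma ccov_diff1:
  assumes "L2 M U1" "L2 M U2" "L2 M V"
  shows "ccov M Z z (\<lambda>\<omega>. U1 \<omega> - U2 \<omega>) V = ccov M Z z U1 V - ccov M Z z U2 V"
proof -
  have "integrable M U1" "integrable M U2" using L2_int[OF P] assms by auto
  moreover have "integrable M (\<lambda>\<omega>. U1 \<omega> * V \<omega>)" "integrable M (\<lambda>\<omega>. U2 \<omega> * V \<omega>)"
    using L2_mult assms by auto
  moreover have "(\<lambda>\<omega>. (U1 \<omega> - U2 \<omega>) * V \<omega>) = (\<lambda>\<omega>. U1 \<omega> * V \<omega> - U2 \<omega> * V \<omega>)"
    by (simp add: algebra_simps)
  ultimately have "cexp M Z z (\<lambda>\<omega>. U1 \<omega> * V \<omega> - U2 \<omega> * V \<omega>) = cexp M Z z (\<lambda>\<omega>. U1 \<omega> * V \<omega>) - cexp M Z z (\<lambda>\<omega>. U2 \<omega> * V \<omega>)"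
    "cexp M Z z (\<lambda>\<omega>. U1 \<omega> - U2 \<omega>) = cexp M Z z U1 - cexp M Z z U2"
    using cexp_diff[OF S] by auto
  note h = this
  show ?thesis
    unfolding \<open>(\<lambda>\<omega>. (U1 \<omega> - U2 \<omega>) * V \<omega>) = (\<lambda>\<omega>. U1 \<omega> * V \<omega> - U2 \<omega> * V \<omega>)\<close> ccov_alt[OF L2_diff[OF assms(1,2)] assms(3)] ccov_alt[OF assms(1,3)] ccov_alt[OF assms(2,3)] h
    by (simp add: algebra_simps)
qed

end

lemma ccov_sym: "ccov M Z z U V = ccov M Z z V U"
  unfolding ccov_def by (simp add: mult.commute)

lemma inner_as_sum: "(x::real^'p) \<bullet> b = (\<Sum>i\<in>UNIV. b $ i * x $ i)"
  unfolding inner_vec_def by (simp add: mult.commute)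

context
  fixes M :: "'a measure" and Z :: "'a \<Rightarrow> 'z" and z :: 'z and X :: "'a \<Rightarrow> real^'p::finite"
  assumes P: "prob_space M" and S: "{\<omega>\<in>space M. Z \<omega> = z} \<in> sets M"
    and pos: "measure M {\<omega>\<in>space M. Z \<omega> = z} > 0"
    and LX: "\<And>i. L2 M (\<lambda>\<omega>. X \<omega> $ i)"
begin

lemma ccovS:
  assumes V: "L2 M V"
  shows "ccov M Z z (\<lambda>\<omega>. X \<omega> \<bullet> b) V = (\<Sum>i\<in>UNIV. b $ i * ccov M Z z (\<lambda>\<omega>. X \<omega> $ i) V)"
  unfolding inner_as_sum by (rule ccov_sum1[OF P S pos]) (use LX V in auto)

lemma LS: "L2 M (\<lambda>\<omega>. X \<omega> \<bullet> b)"
  unfolding inner_as_sum by (rule L2_sum) (auto intro: L2_cmult LX)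

lemma ccovS_Y:
  assumes V: "L2 M V"
  shows "ccov M Z z (\<lambda>\<omega>. X \<omega> \<bullet> b) V = b \<bullet> ccovXY M Z z X V"
  unfolding ccovS[OF V] by (simp add: ccovXY_def inner_vec_def)

lemma ccovS_S:
  shows "ccov M Z z (\<lambda>\<omega>. X \<omega> \<bullet> b) (\<lambda>\<omega>. X \<omega> \<bullet> b) = qf (cvarX M Z z X) b"
proof -
  have "ccov M Z z (\<lambda>\<omega>. X \<omega> \<bullet> b) (\<lambda>\<omega>. X \<omega> \<bullet> b)
      = (\<Sum>i\<in>UNIV. b $ i * ccov M Z z (\<lambda>\<omega>. X \<omega> $ i) (\<lambda>\<omega>. X \<omega> \<bullet> b))"
    by (rule ccovS[OF LS])
  also have "\<dots> = (\<Sum>i\<in>UNIV. b $ i * (\<Sum>j\<in>UNIV. ccov M Z z (\<lambda>\<omega>. X \<omega> $ i) (\<lambda>\<omega>. X \<omega> $ j) * b $ j))"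
  proof (rule sum.cong[OF refl])
    fix i
    have "ccov M Z z (\<lambda>\<omega>. X \<omega> $ i) (\<lambda>\<omega>. X \<omega> \<bullet> b) = ccov M Z z (\<lambda>\<omega>. X \<omega> \<bullet> b) (\<lambda>\<omega>. X \<omega> $ i)"
      by (rule ccov_sym)
    also have "\<dots> = (\<Sum>j\<in>UNIV. b $ j * ccov M Z z (\<lambda>\<omega>. X \<omega> $ j) (\<lambda>\<omega>. X \<omega> $ i))"
      by (rule ccovS[OF LX])
    also have "\<dots> = (\<Sum>j\<in>UNIV. ccov M Z z (\<lambda>\<omega>. X \<omega> $ i) (\<lambda>\<omega>. X \<omega> $ j) * b $ j)"
      by (rule sum.cong[OF refl]) (simp add: mult.commute ccov_sym[of M Z z "\<lambda>\<omega>. X \<omega> $ i"])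
    finally show "b $ i * ccov M Z z (\<lambda>\<omega>. X \<omega> $ i) (\<lambda>\<omega>. X \<omega> \<bullet> b) = b $ i * (\<Sum>j\<in>UNIV. ccov M Z z (\<lambda>\<omega>. X \<omega> $ i) (\<lambda>\<omega>. X \<omega> $ j) * b $ j)"
      by simp
  qed
  also have "\<dots> = qf (cvarX M Z z X) b"
    unfolding qf_def cvarX_def inner_vec_def matrix_vector_mult_def
    by (simp add: mult.commute)
  finally show ?thesis .
qed

lemma cvar_lin:
  assumes Y: "L2 M Y"
  shows "cvar M Z z (\<lambda>\<omega>. Y \<omega> - X \<omega> \<bullet> b)
       = cvar M Z z Y - 2 * (b \<bullet> ccovXY M Z z X Y) + qf (cvarX M Z z X) b"
proof -
  let ?S = "\<lambda>\<omega>. X \<omega> \<bullet> b"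
  have LD: "L2 M (\<lambda>\<omega>. Y \<omega> - ?S \<omega>)" by (rule L2_diff[OF Y LS])
  have "cvar M Z z (\<lambda>\<omega>. Y \<omega> - ?S \<omega>) = ccov M Z z Y (\<lambda>\<omega>. Y \<omega> - ?S \<omega>) - ccov M Z z ?S (\<lambda>\<omega>. Y \<omega> - ?S \<omega>)"
    unfolding cvar_def by (rule ccov_diff1[OF P S pos Y LS LD])
  also have "ccov M Z z Y (\<lambda>\<omega>. Y \<omega> - ?S \<omega>) = ccov M Z z Y Y - ccov M Z z ?S Y"
    by (subst ccov_sym) (rule ccov_diff1[OF P S pos Y LS Y])
  also have "ccov M Z z ?S (\<lambda>\<omega>. Y \<omega> - ?S \<omega>) = ccov M Z z Y ?S - ccov M Z z ?S ?S"
    by (subst ccov_sym) (rule ccov_diff1[OF P S pos Y LS LS])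
  also have "ccov M Z z Y ?S = ccov M Z z ?S Y" by (rule ccov_sym)
  finally show ?thesis unfolding ccovS_S ccovS_Y[OF Y] cvar_def by simp
qed

end

lemma B_sym:
  fixes A :: "real^'p::finite^'p"
  assumes "transpose A = A"
  shows "x \<bullet> (A *v y) = y \<bullet> (A *v x)"
proof -
  have "x \<bullet> (A *v y) = (x v* A) \<bullet> y" by (simp add: dot_lmul_matrix)
  also have "x v* A = A *v x" by (metis assms vector_transpose_matrix)
  finally show ?thesis by (simp add: inner_commute)
qed

lemma cvarX_sym: "transpose (cvarX M Z z X) = cvarX M Z z X"
  unfolding transpose_def cvarX_def ccov_def by (simp add: mult.commute)

lemma posdef_inv:
  fixes A :: "real^'p::finite^'p"
  assumes "pos_def A"
  shows "A *v (matrix_inv A *v c) = c"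
proof -
  have "\<forall>x. A *v x = 0 \<longrightarrow> x = 0"
  proof (intro allI impI)
    fix x assume "A *v x = 0"
    then have "\<not> x \<bullet> (A *v x) > 0" by simp
    then show "x = 0" using assms unfolding pos_def_def by blast
  qed
  then have "\<exists>B. B ** A = mat 1" by (rule matrix_left_invertible_ker[THEN iffD2])
  then have "invertible A" using invertible_left_inverse[of A] by simp
  then have "A ** matrix_inv A = mat 1 \<and> matrix_inv A ** A = mat 1"
    unfolding invertible_def matrix_inv_def by (rule someI_ex)
  then show ?thesis by (simp add: matrix_vector_mul_assoc)
qed

lemma posdef_qf:
  fixes A :: "real^'p::finite^'p"
  assumes "pos_def A"
  shows "qf A v \<ge> 0" and "qf A v = 0 \<longleftrightarrow> v = 0"
proof -
  show "qf A v = 0 \<longleftrightarrow> v = 0"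
  proof
    assume "qf A v = 0" then show "v = 0" using assms unfolding pos_def_def qf_def by force
  qed (simp add: qf_def)
  show "qf A v \<ge> 0"
  proof (cases "v = 0")
    case True then show ?thesis by (simp add: qf_def)
  next
    case False then show ?thesis using assms unfolding pos_def_def qf_def by (simp add: less_imp_le)
  qed
qed

lemmas expand_simps = qf_def inner_add_left inner_add_right inner_diff_left inner_diff_right
  matrix_vector_right_distrib matrix_vector_mult_diff_distrib matrix_vector_mult_scaleR
  inner_scaleR_left inner_scaleR_right

lemma qf_lin2:
  fixes A :: "real^'p::finite^'p"
  assumes sym: "transpose A = A"
  shows "qf A (c *\<^sub>R a + d *\<^sub>R b) = c * c * qf A a + 2 * c * d * (a \<bullet> (A *v b)) + d * d * qf A b"
proof -
  have bs: "b \<bullet> (A *v a) = a \<bullet> (A *v b)" by (rule B_sym[OF sym])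
  show ?thesis unfolding qf_def
    by (simp add: inner_add_left inner_add_right matrix_vector_right_distrib matrix_vector_mult_scaleR bs algebra_simps)
qed

lemma qf_lin3:
  fixes A :: "real^'p::finite^'p"
  assumes sym: "transpose A = A"
  shows "qf A (c *\<^sub>R a + d *\<^sub>R b + e *\<^sub>R w) = c * c * qf A a + 2 * c * d * (a \<bullet> (A *v b)) + d * d * qf A b
     + 2 * c * e * (a \<bullet> (A *v w)) + 2 * d * e * (b \<bullet> (A *v w)) + e * e * qf A w"
proof -
  have bs: "b \<bullet> (A *v a) = a \<bullet> (A *v b)" "w \<bullet> (A *v a) = a \<bullet> (A *v w)" "w \<bullet> (A *v b) = b \<bullet> (A *v w)"
    by (rule B_sym[OF sym])+
  show ?thesis unfolding qf_def
    by (simp add: inner_add_left inner_add_right matrix_vector_right_distrib matrix_vector_mult_scaleR bs algebra_simps)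
qed

lemma real_U0:
  fixes p q r vt vs Qa Qb B :: real
  assumes p: "p \<noteq> 0" and q: "q \<noteq> 0" and r: "r \<noteq> 0" and rpq: "r = p + q"
  shows "(vt / p + vs / q) - ((vt - 2 * Qa + Qa) / p + (vs - 2 * Qb + Qb) / q + (Qa - 2 * B + Qb))
       = (q * q * Qa + 2 * q * p * B + p * p * Qb) / (p * q * r) + (Qa - 2 * B + Qb) * (1 / r - 1)"
proof -
  have "r * ((vt / p + vs / q) - ((vt - 2 * Qa + Qa) / p + (vs - 2 * Qb + Qb) / q + (Qa - 2 * B + Qb)))
       = r * ((q * q * Qa + 2 * q * p * B + p * p * Qb) / (p * q * r) + (Qa - 2 * B + Qb) * (1 / r - 1))"
    using p q r by (simp add: field_simps) (simp add: rpq algebra_simps)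
  then show ?thesis using r by simp
qed

lemma real_U:
  fixes p q vt vs Qa Qb B :: real
  assumes p: "p > 0" and q: "q > 0"
  shows "(vt / p + vs / q) - ((vt - 2 * Qa + Qa) / p + (vs - 2 * Qb + Qb) / q + (Qa - 2 * B + Qb))
       = (q * q * Qa + 2 * q * p * B + p * p * Qb) / (p * q * (p + q)) + (Qa - 2 * B + Qb) * (1 / (p + q) - 1)"
  using real_U0[of p q "p + q"] p q by simp

lemma real_B1:
  fixes p q vt vs Qa Qb Qc Bab Bac Bbc :: real
  assumes p: "p > 0" and q: "q > 0"
  shows "((vt - 2 * Bac + Qc) / p + (vs - 2 * Bbc + Qc) / q)
       - ((vt - 2 * Qa + Qa) / p + (vs - 2 * Qb + Qb) / q + (Qa - 2 * Bab + Qb))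
       = (Qa - 2 * Bac + Qc) / p + (Qb - 2 * Bbc + Qc) / q - (Qa - 2 * Bab + Qb)"
  using p q by (simp add: field_simps)

lemma real_B20:
  fixes p q r Qa Qb Qc Bab Bac Bbc :: real
  assumes p: "p \<noteq> 0" and q: "q \<noteq> 0" and r: "r \<noteq> 0" and rpq: "r = p + q"
  shows "(Qa - 2 * Bac + Qc) / p + (Qb - 2 * Bbc + Qc) / q - (Qa - 2 * Bab + Qb)
       = (q * q * Qa + 2 * q * p * Bab + p * p * Qb + 2 * q * (- r) * Bac + 2 * p * (- r) * Bbc
           + (- r) * (- r) * Qc) / (p * q * r) + (Qa - 2 * Bab + Qb) * (1 / r - 1)"
proof -
  have "r * ((Qa - 2 * Bac + Qc) / p + (Qb - 2 * Bbc + Qc) / q - (Qa - 2 * Bab + Qb))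
       = r * ((q * q * Qa + 2 * q * p * Bab + p * p * Qb + 2 * q * (- r) * Bac + 2 * p * (- r) * Bbc
           + (- r) * (- r) * Qc) / (p * q * r) + (Qa - 2 * Bab + Qb) * (1 / r - 1))"
    using p q r by (simp add: field_simps) (simp add: rpq algebra_simps)
  then show ?thesis using r by simp
qed

lemma real_B2:
  fixes p q Qa Qb Qc Bab Bac Bbc :: real
  assumes p: "p > 0" and q: "q > 0"
  shows "(Qa - 2 * Bac + Qc) / p + (Qb - 2 * Bbc + Qc) / q - (Qa - 2 * Bab + Qb)
       = (q * q * Qa + 2 * q * p * Bab + p * p * Qb + 2 * q * (- (p + q)) * Bac + 2 * p * (- (p + q)) * Bbc
           + (- (p + q)) * (- (p + q)) * Qc) / (p * q * (p + q)) + (Qa - 2 * Bab + Qb) * (1 / (p + q) - 1)"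
  using real_B20[of p q "p + q"] p q by simp

lemma qf_diff:
  fixes A :: "real^'p::finite^'p"
  assumes sym: "transpose A = A"
  shows "qf A (a - b) = qf A a - 2 * (a \<bullet> (A *v b)) + qf A b"
  using qf_lin2[OF sym, of 1 a "-1" b] by simp

lemma sum_zero_iff:
  fixes H Pz :: "'z \<Rightarrow> real"
  assumes "finite Zs" "\<And>z. z \<in> Zs \<Longrightarrow> Pz z > 0" "\<And>z. z \<in> Zs \<Longrightarrow> H z \<ge> 0"
  shows "(\<Sum>z\<in>Zs. H z * Pz z) \<ge> 0" and "(\<Sum>z\<in>Zs. H z * Pz z) = 0 \<longleftrightarrow> (\<forall>z\<in>Zs. H z = 0)"
proof -
  have nn: "\<And>z. z \<in> Zs \<Longrightarrow> H z * Pz z \<ge> 0" using assms by (simp add: less_imp_le)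
  show "(\<Sum>z\<in>Zs. H z * Pz z) \<ge> 0" using nn by (rule sum_nonneg)
  show "(\<Sum>z\<in>Zs. H z * Pz z) = 0 \<longleftrightarrow> (\<forall>z\<in>Zs. H z = 0)"
    using sum_nonneg_eq_0_iff[OF assms(1) nn] assms(2) by force
qed

lemma final_logic:
  fixes I1 I2 D k :: real
  assumes "I1 \<ge> 0" "I2 \<ge> 0" "D > 0" "k \<ge> 0"
  shows "I1 / D + I2 * k \<ge> 0" and "I1 / D + I2 * k = 0 \<longleftrightarrow> I1 = 0 \<and> (k = 0 \<or> I2 = 0)"
proof -
  have a: "I1 / D \<ge> 0" "I2 * k \<ge> 0" using assms by auto
  show "I1 / D + I2 * k \<ge> 0" using a by simp
  show "I1 / D + I2 * k = 0 \<longleftrightarrow> I1 = 0 \<and> (k = 0 \<or> I2 = 0)"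
  proof
    assume h: "I1 / D + I2 * k = 0"
    then have "I1 / D = 0" "I2 * k = 0" using a by linarith+
    then show "I1 = 0 \<and> (k = 0 \<or> I2 = 0)" using assms by auto
  qed (auto)
qed

lemma sum_lin2:
  fixes f g P :: "'z \<Rightarrow> real"
  shows "(\<Sum>z\<in>Zs. (f z / D + g z * k) * P z) = (\<Sum>z\<in>Zs. f z * P z) / D + (\<Sum>z\<in>Zs. g z * P z) * k"
  by (simp add: sum.distrib sum_divide_distrib sum_distrib_right sum_distrib_left algebra_simps)

lemma sum_lin3:
  fixes f g h P :: "'z \<Rightarrow> real"
  shows "(\<Sum>z\<in>Zs. (f z / p + g z / q - h z) * P z) = (\<Sum>z\<in>Zs. f z * P z) / p + (\<Sum>z\<in>Zs. g z * P z) / q - (\<Sum>z\<in>Zs. h z * P z)"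
  by (simp add: sum.distrib sum_subtractf sum_divide_distrib sum_distrib_right algebra_simps)

lemma sum_sub:
  fixes F G H P :: "'z \<Rightarrow> real"
  shows "(\<Sum>z\<in>Zs. F z * P z) - ((\<Sum>z\<in>Zs. G z * P z) + (\<Sum>z\<in>Zs. H z * P z)) = (\<Sum>z\<in>Zs. (F z - (G z + H z)) * P z)"
  by (simp add: sum.distrib sum_subtractf algebra_simps)

lemma vec_solve:
  fixes x y :: "real^'p::finite"
  assumes "r > 0"
  shows "x + (- r) *\<^sub>R y = 0 \<longleftrightarrow> y = (1 / r) *\<^sub>R x"
proof
  assume "x + (- r) *\<^sub>R y = 0"
  then have "x = r *\<^sub>R y" by (simp add: algebra_simps)
  then show "y = (1 / r) *\<^sub>R x" using assms by simp
next
  assume "y = (1 / r) *\<^sub>R x"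
  then show "x + (- r) *\<^sub>R y = 0" using assms by simp
qed




theorem theorem2:
  fixes M :: "'a measure"
    and \<pi> :: "'k::finite \<Rightarrow> real"
    and s t :: 'k
    and YV :: "'a \<Rightarrow> real^'k" and W :: "'a \<Rightarrow> real^'q::finite"
    and YVs :: "nat \<Rightarrow> 'a \<Rightarrow> real^'k" and Ws :: "nat \<Rightarrow> 'a \<Rightarrow> real^'q"
    and In :: "nat \<Rightarrow> nat \<Rightarrow> 'a \<Rightarrow> 'k"
    and zf :: "real^'q \<Rightarrow> 'z" and xf :: "real^'q \<Rightarrow> real^'p::finite"
    and Zs :: "'z set"
    and Z :: "'a \<Rightarrow> 'z" and X :: "'a \<Rightarrow> real^'p"
    and \<beta> :: "'k \<Rightarrow> 'z \<Rightarrow> real^'p" and bb :: "'z \<Rightarrow> real^'p"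
    and V :: "'z \<Rightarrow> real^'p^'p" and \<sigma>U \<sigma>A \<sigma>B :: real
  assumes Z_def: "Z = (\<lambda>\<omega>. zf (W \<omega>))"
    and X_def: "X = (\<lambda>\<omega>. xf (W \<omega>))"
    and beta_def: "\<beta> = (\<lambda>l z. betaC M Z z X (\<lambda>\<omega>. YV \<omega> $ l))"
    and bb_def: "bb = (\<lambda>z. \<Sum>l\<in>UNIV. \<pi> l *\<^sub>R \<beta> l z)"
    and V_def: "V = (\<lambda>z. cvarX M Z z X)"
    and sU_def: "\<sigma>U = (\<integral>\<omega>. cvar M Z (Z \<omega>) (\<lambda>\<omega>'. YV \<omega>' $ t) / \<pi> t
                     + cvar M Z (Z \<omega>) (\<lambda>\<omega>'. YV \<omega>' $ s) / \<pi> s \<partial>M)"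
    and sA_def: "\<sigma>A = (\<integral>\<omega>. cvar M Z (Z \<omega>) (\<lambda>\<omega>'. YV \<omega>' $ t - X \<omega>' \<bullet> \<beta> t (Z \<omega>)) / \<pi> t
                     + cvar M Z (Z \<omega>) (\<lambda>\<omega>'. YV \<omega>' $ s - X \<omega>' \<bullet> \<beta> s (Z \<omega>)) / \<pi> s \<partial>M)
              + (\<integral>\<omega>. qf (V (Z \<omega>)) (\<beta> t (Z \<omega>) - \<beta> s (Z \<omega>)) \<partial>M)"
    and sB_def: "\<sigma>B = (\<integral>\<omega>. cvar M Z (Z \<omega>) (\<lambda>\<omega>'. YV \<omega>' $ t - X \<omega>' \<bullet> bb (Z \<omega>)) / \<pi> t
                     + cvar M Z (Z \<omega>) (\<lambda>\<omega>'. YV \<omega>' $ s - X \<omega>' \<bullet> bb (Z \<omega>)) / \<pi> s \<partial>M)"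
    and P: "prob_space M"
    and st: "s \<noteq> t"
    and pi_pos: "\<And>l. 0 < \<pi> l" and pi_lt1: "\<And>l. \<pi> l < 1" and pi_sum: "(\<Sum>l\<in>UNIV. \<pi> l) = 1"
    \<comment> \<open>measurability of generic and sample variables and of the functions defining Z and X\<close>
    and meas_YV: "YV \<in> borel_measurable M" and meas_W: "W \<in> borel_measurable M"
    and meas_YVs: "\<And>i. YVs i \<in> borel_measurable M" and meas_Ws: "\<And>i. Ws i \<in> borel_measurable M"
    and meas_In: "\<And>n i. In n i \<in> measurable M (count_space UNIV)"
    and meas_zf: "zf \<in> measurable borel (count_space UNIV)"
    and meas_xf: "xf \<in> borel_measurable borel"
    \<comment> \<open>(C1): i.i.d. sample distributed as the generic variables; finite second moments\<close>
    and C1_indep: "prob_space.indep_vars M (\<lambda>_. borel) (\<lambda>i \<omega>. (YVs i \<omega>, Ws i \<omega>)) UNIV"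
    and C1_dist: "\<And>i. distr M borel (\<lambda>\<omega>. (YVs i \<omega>, Ws i \<omega>)) = distr M borel (\<lambda>\<omega>. (YV \<omega>, W \<omega>))"
    and C1_mom: "\<And>l. integrable M (\<lambda>\<omega>. (YV \<omega> $ l)\<^sup>2)"
    \<comment> \<open>(C2): assignments and sample conditionally independent given Z_1,...,Z_n\<close>
    and C2: "\<And>n (a :: nat \<Rightarrow> 'k) (zz :: nat \<Rightarrow> 'z) B.
      B \<in> sets (PiM {..<n} (\<lambda>_. borel)) \<Longrightarrow>
      measure M {\<omega>\<in>space M. (\<forall>i<n. In n i \<omega> = a i) \<and> (\<lambda>i\<in>{..<n}. (YVs i \<omega>, Ws i \<omega>)) \<in> B
                            \<and> (\<forall>i<n. zf (Ws i \<omega>) = zz i)}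
      * measure M {\<omega>\<in>space M. \<forall>i<n. zf (Ws i \<omega>) = zz i}
      = measure M {\<omega>\<in>space M. (\<forall>i<n. In n i \<omega> = a i) \<and> (\<forall>i<n. zf (Ws i \<omega>) = zz i)}
      * measure M {\<omega>\<in>space M. (\<lambda>i\<in>{..<n}. (YVs i \<omega>, Ws i \<omega>)) \<in> B
                            \<and> (\<forall>i<n. zf (Ws i \<omega>) = zz i)}"
    \<comment> \<open>(C3): Z takes finitely many values in Zs; assignment probabilities; balance\<close>
    and C3_fin: "finite Zs" and C3_vals: "\<And>w. zf w \<in> Zs"
    and C3_pos: "\<And>z. z \<in> Zs \<Longrightarrow> measure M {\<omega>\<in>space M. Z \<omega> = z} > 0"
    and C3_assign: "\<And>n i l (zz :: nat \<Rightarrow> 'z). i < n \<Longrightarrow>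
      measure M {\<omega>\<in>space M. In n i \<omega> = l \<and> (\<forall>j<n. zf (Ws j \<omega>) = zz j)}
      = \<pi> l * measure M {\<omega>\<in>space M. \<forall>j<n. zf (Ws j \<omega>) = zz j}"
    and C3_bal: "\<And>z l \<epsilon>. z \<in> Zs \<Longrightarrow> \<epsilon> > 0 \<Longrightarrow>
      (\<lambda>n. measure M {\<omega>\<in>space M.
         \<bar>(real (card {i. i < n \<and> zf (Ws i \<omega>) = z \<and> In n i \<omega> = l})
            - \<pi> l * real (card {i. i < n \<and> zf (Ws i \<omega>) = z}))
          / real (card {i. i < n \<and> zf (Ws i \<omega>) = z})\<bar> > \<epsilon>}) \<longlonglongrightarrow> 0"
    \<comment> \<open>moment conditions on X and X Y^(l); positive definiteness of var(X | Z = z)\<close>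
    and momX: "integrable M (\<lambda>\<omega>. (norm (X \<omega>))\<^sup>2)"
    and momXY: "\<And>l. integrable M (\<lambda>\<omega>. (norm (YV \<omega> $ l *\<^sub>R X \<omega>))\<^sup>2)"
    and posdef: "\<And>z. z \<in> Zs \<Longrightarrow> pos_def (V z)"
  shows "(\<sigma>U - \<sigma>A =
           (\<integral>\<omega>. qf (V (Z \<omega>)) (\<pi> s *\<^sub>R \<beta> t (Z \<omega>) + \<pi> t *\<^sub>R \<beta> s (Z \<omega>)) \<partial>M)
             / (\<pi> t * \<pi> s * (\<pi> t + \<pi> s))
         + (\<integral>\<omega>. qf (V (Z \<omega>)) (\<beta> t (Z \<omega>) - \<beta> s (Z \<omega>)) \<partial>M) * (1 / (\<pi> t + \<pi> s) - 1))
    \<and> (\<sigma>B - \<sigma>A =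
           (\<integral>\<omega>. qf (V (Z \<omega>)) (\<beta> t (Z \<omega>) - bb (Z \<omega>)) \<partial>M) / \<pi> t
         + (\<integral>\<omega>. qf (V (Z \<omega>)) (\<beta> s (Z \<omega>) - bb (Z \<omega>)) \<partial>M) / \<pi> s
         - (\<integral>\<omega>. qf (V (Z \<omega>)) (\<beta> t (Z \<omega>) - \<beta> s (Z \<omega>)) \<partial>M))
    \<and> (\<sigma>A \<le> \<sigma>U \<and>
         (\<sigma>A = \<sigma>U \<longleftrightarrow> (\<forall>z\<in>Zs. \<pi> s *\<^sub>R \<beta> t z + \<pi> t *\<^sub>R \<beta> s z = 0
                               \<and> (1 - \<pi> t - \<pi> s) *\<^sub>R (\<beta> t z - \<beta> s z) = 0)))
    \<and> (\<sigma>A \<le> \<sigma>B \<and>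
         (\<sigma>A = \<sigma>B \<longleftrightarrow> (\<forall>z\<in>Zs. bb z = (1 / (\<pi> s + \<pi> t)) *\<^sub>R (\<pi> s *\<^sub>R \<beta> t z + \<pi> t *\<^sub>R \<beta> s z)
                               \<and> (1 - \<pi> t - \<pi> s) *\<^sub>R (\<beta> t z - \<beta> s z) = 0)))"
proof -
  interpret prob_space M by (rule P)
  define p where "p = \<pi> t"
  define q where "q = \<pi> s"
  define Pz where "Pz = (\<lambda>z. measure M {\<omega>\<in>space M. Z \<omega> = z})"
  have p0: "p > 0" and q0: "q > 0" unfolding p_def q_def using pi_pos by auto
  have measZ: "Z \<in> measurable M (count_space UNIV)"
    unfolding Z_def by (rule measurable_compose[OF meas_W meas_zf])
  have Sz: "{\<omega>\<in>space M. Z \<omega> = z} \<in> sets M" for z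
  proof -
    have "{\<omega>\<in>space M. Z \<omega> = z} = Z -` {z} \<inter> space M" by auto
    then show ?thesis using measurable_sets[OF measZ, of "{z}"] by simp
  qed
  have ZinZs: "Z \<omega> \<in> Zs" for \<omega> unfolding Z_def by (rule C3_vals)
  have Ppos: "z \<in> Zs \<Longrightarrow> Pz z > 0" for z unfolding Pz_def by (rule C3_pos)
  have measX: "X \<in> borel_measurable M"
    unfolding X_def by (rule measurable_compose[OF meas_W meas_xf])
  have LX: "L2 M (\<lambda>\<omega>. X \<omega> $ i)" for i
    unfolding L2_def
  proof
    show "(\<lambda>\<omega>. X \<omega> $ i) \<in> borel_measurable M"
      by (rule measurable_compose[OF measX borel_measurable_nth])
    show "integrable M (\<lambda>\<omega>. (X \<omega> $ i)\<^sup>2)"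
    proof (rule Bochner_Integration.integrable_bound[OF momX])
      show "(\<lambda>\<omega>. (X \<omega> $ i)\<^sup>2) \<in> borel_measurable M"
        using measurable_compose[OF measX borel_measurable_nth] by measurable
      show "AE \<omega> in M. norm ((X \<omega> $ i)\<^sup>2) \<le> norm ((norm (X \<omega>))\<^sup>2)"
      proof (rule AE_I2)
        fix \<omega>
        have "\<bar>X \<omega> $ i\<bar>\<^sup>2 \<le> (norm (X \<omega>))\<^sup>2"
          by (rule power_mono[OF component_le_norm_cart]) simp
        then show "norm ((X \<omega> $ i)\<^sup>2) \<le> norm ((norm (X \<omega>))\<^sup>2)" by simp
      qed
    qed
  qed
  have LY: "L2 M (\<lambda>\<omega>. YV \<omega> $ l)" for l
    unfolding L2_def
  proof
    show "(\<lambda>\<omega>. YV \<omega> $ l) \<in> borel_measurable M"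
      by (rule measurable_compose[OF meas_YV borel_measurable_nth])
    show "integrable M (\<lambda>\<omega>. (YV \<omega> $ l)\<^sup>2)" by (rule C1_mom)
  qed
  have intZ: "(\<integral>\<omega>. G (Z \<omega>) \<partial>M) = (\<Sum>z\<in>Zs. G z * Pz z)" for G :: "'z \<Rightarrow> real"
  proof -
    have "(\<integral>\<omega>. G (Z \<omega>) \<partial>M) = (\<integral>\<omega>. (\<Sum>z\<in>Zs. G z * indicator {\<omega>\<in>space M. Z \<omega> = z} \<omega>) \<partial>M)"
    proof (rule Bochner_Integration.integral_cong[OF refl])
      fix \<omega> assume "\<omega> \<in> space M"
      then have "(\<Sum>z\<in>Zs. G z * indicator {\<omega>\<in>space M. Z \<omega> = z} \<omega>) = (\<Sum>z\<in>Zs. if z = Z \<omega> then G z else 0)"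
        by (intro sum.cong) (auto simp: indicator_def)
      also have "\<dots> = G (Z \<omega>)" using C3_fin ZinZs by simp
      finally show "G (Z \<omega>) = (\<Sum>z\<in>Zs. G z * indicator {\<omega>\<in>space M. Z \<omega> = z} \<omega>)" by simp
    qed
    also have "\<dots> = (\<Sum>z\<in>Zs. (\<integral>\<omega>. G z * indicator {\<omega>\<in>space M. Z \<omega> = z} \<omega> \<partial>M))"
    proof (rule Bochner_Integration.integral_sum)
      fix z
      show "integrable M (\<lambda>\<omega>. G z * indicator {\<omega>\<in>space M. Z \<omega> = z} \<omega>)"
        using integrable_real_mult_indicator[OF Sz, where f="\<lambda>_. G z"] by simp
    qed
    also have "\<dots> = (\<Sum>z\<in>Zs. G z * Pz z)"
    proof (rule sum.cong[OF refl])
      fix z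
      have "{\<omega>\<in>space M. Z \<omega> = z} \<inter> space M = {\<omega>\<in>space M. Z \<omega> = z}" by auto
      then show "(\<integral>\<omega>. G z * indicator {\<omega>\<in>space M. Z \<omega> = z} \<omega> \<partial>M) = G z * Pz z"
        unfolding Pz_def by simp
    qed
    finally show ?thesis .
  qed
  have symV: "transpose (V z) = V z" for z unfolding V_def by (rule cvarX_sym)
  have cv: "cvar M Z z (\<lambda>\<omega>. YV \<omega> $ l - X \<omega> \<bullet> c)
      = cvar M Z z (\<lambda>\<omega>. YV \<omega> $ l) - 2 * (c \<bullet> (V z *v \<beta> l z)) + qf (V z) c"
    if hz: "z \<in> Zs" for z l c
  proof -
    have "V z *v \<beta> l z = ccovXY M Z z X (\<lambda>\<omega>. YV \<omega> $ l)"
      unfolding beta_def betaC_def V_def using posdef[OF hz] unfolding V_def by (rule posdef_inv)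
    then show ?thesis unfolding V_def
      using cvar_lin[OF P Sz C3_pos[OF hz] LX LY[of l], of c] by simp
  qed
  define a where "a = \<beta> t"
  define b where "b = \<beta> s"
  define vY where "vY = (\<lambda>l z. cvar M Z z (\<lambda>\<omega>. YV \<omega> $ l))"
  have cvA: "cvar M Z z (\<lambda>\<omega>. YV \<omega> $ t - X \<omega> \<bullet> a z) = vY t z - 2 * qf (V z) (a z) + qf (V z) (a z)"
    "cvar M Z z (\<lambda>\<omega>. YV \<omega> $ s - X \<omega> \<bullet> b z) = vY s z - 2 * qf (V z) (b z) + qf (V z) (b z)"
    if hz: "z \<in> Zs" for z
    unfolding vY_def a_def b_def using cv[OF hz] by (simp_all add: qf_def)
  have cvB: "cvar M Z z (\<lambda>\<omega>. YV \<omega> $ t - X \<omega> \<bullet> bb z) = vY t z - 2 * (a z \<bullet> (V z *v bb z)) + qf (V z) (bb z)"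
    "cvar M Z z (\<lambda>\<omega>. YV \<omega> $ s - X \<omega> \<bullet> bb z) = vY s z - 2 * (b z \<bullet> (V z *v bb z)) + qf (V z) (bb z)"
    if hz: "z \<in> Zs" for z
    unfolding vY_def a_def b_def using cv[OF hz] B_sym[OF symV] by simp_all
  have ptU: "(vY t z / p + vY s z / q)
      - ((cvar M Z z (\<lambda>\<omega>. YV \<omega> $ t - X \<omega> \<bullet> a z) / p + cvar M Z z (\<lambda>\<omega>. YV \<omega> $ s - X \<omega> \<bullet> b z) / q)
         + qf (V z) (a z - b z))
      = qf (V z) (q *\<^sub>R a z + p *\<^sub>R b z) / (p * q * (p + q)) + qf (V z) (a z - b z) * (1 / (p + q) - 1)"
    if hz: "z \<in> Zs" for z
    unfolding cvA[OF hz] qf_diff[OF symV] qf_lin2[OF symV]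
    by (rule real_U[OF p0 q0])
  have ptB1: "(cvar M Z z (\<lambda>\<omega>. YV \<omega> $ t - X \<omega> \<bullet> bb z) / p + cvar M Z z (\<lambda>\<omega>. YV \<omega> $ s - X \<omega> \<bullet> bb z) / q)
      - ((cvar M Z z (\<lambda>\<omega>. YV \<omega> $ t - X \<omega> \<bullet> a z) / p + cvar M Z z (\<lambda>\<omega>. YV \<omega> $ s - X \<omega> \<bullet> b z) / q)
         + qf (V z) (a z - b z))
      = qf (V z) (a z - bb z) / p + qf (V z) (b z - bb z) / q - qf (V z) (a z - b z)"
    if hz: "z \<in> Zs" for z
    unfolding cvA[OF hz] cvB[OF hz] qf_diff[OF symV]
    by (rule real_B1[OF p0 q0])
  have ptB2: "qf (V z) (a z - bb z) / p + qf (V z) (b z - bb z) / q - qf (V z) (a z - b z)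
      = qf (V z) (q *\<^sub>R a z + p *\<^sub>R b z + (- (p + q)) *\<^sub>R bb z) / (p * q * (p + q))
        + qf (V z) (a z - b z) * (1 / (p + q) - 1)" for z
    unfolding qf_diff[OF symV] qf_lin3[OF symV]
    by (rule real_B2[OF p0 q0])
  have eU: "\<sigma>U = (\<Sum>z\<in>Zs. (vY t z / p + vY s z / q) * Pz z)"
    unfolding sU_def vY_def p_def q_def
    using intZ[of "\<lambda>z. cvar M Z z (\<lambda>\<omega>'. YV \<omega>' $ t) / \<pi> t + cvar M Z z (\<lambda>\<omega>'. YV \<omega>' $ s) / \<pi> s"] by simp
  have eA: "\<sigma>A = (\<Sum>z\<in>Zs. (cvar M Z z (\<lambda>\<omega>. YV \<omega> $ t - X \<omega> \<bullet> a z) / p + cvar M Z z (\<lambda>\<omega>. YV \<omega> $ s - X \<omega> \<bullet> b z) / q) * Pz z)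
      + (\<Sum>z\<in>Zs. qf (V z) (a z - b z) * Pz z)"
    unfolding sA_def a_def b_def p_def q_def
    using intZ[of "\<lambda>z. cvar M Z z (\<lambda>\<omega>'. YV \<omega>' $ t - X \<omega>' \<bullet> \<beta> t z) / \<pi> t + cvar M Z z (\<lambda>\<omega>'. YV \<omega>' $ s - X \<omega>' \<bullet> \<beta> s z) / \<pi> s"]
      intZ[of "\<lambda>z. qf (V z) (\<beta> t z - \<beta> s z)"] by simp
  have eB: "\<sigma>B = (\<Sum>z\<in>Zs. (cvar M Z z (\<lambda>\<omega>. YV \<omega> $ t - X \<omega> \<bullet> bb z) / p + cvar M Z z (\<lambda>\<omega>. YV \<omega> $ s - X \<omega> \<bullet> bb z) / q) * Pz z)"
    unfolding sB_def p_def q_def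
    using intZ[of "\<lambda>z. cvar M Z z (\<lambda>\<omega>'. YV \<omega>' $ t - X \<omega>' \<bullet> bb z) / \<pi> t + cvar M Z z (\<lambda>\<omega>'. YV \<omega>' $ s - X \<omega>' \<bullet> bb z) / \<pi> s"]
    by simp
  define I1 where "I1 = (\<integral>\<omega>. qf (V (Z \<omega>)) (\<pi> s *\<^sub>R \<beta> t (Z \<omega>) + \<pi> t *\<^sub>R \<beta> s (Z \<omega>)) \<partial>M)"
  define I2 where "I2 = (\<integral>\<omega>. qf (V (Z \<omega>)) (\<beta> t (Z \<omega>) - \<beta> s (Z \<omega>)) \<partial>M)"
  define I3 where "I3 = (\<integral>\<omega>. qf (V (Z \<omega>)) (\<beta> t (Z \<omega>) - bb (Z \<omega>)) \<partial>M)"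
  define I4 where "I4 = (\<integral>\<omega>. qf (V (Z \<omega>)) (\<beta> s (Z \<omega>) - bb (Z \<omega>)) \<partial>M)"
  define H5 where "H5 = (\<lambda>z. qf (V z) (q *\<^sub>R a z + p *\<^sub>R b z + (- (p + q)) *\<^sub>R bb z))"
  define I5 where "I5 = (\<Sum>z\<in>Zs. H5 z * Pz z)"
  have I1s: "I1 = (\<Sum>z\<in>Zs. qf (V z) (q *\<^sub>R a z + p *\<^sub>R b z) * Pz z)"
    unfolding I1_def a_def b_def p_def q_def using intZ[of "\<lambda>z. qf (V z) (\<pi> s *\<^sub>R \<beta> t z + \<pi> t *\<^sub>R \<beta> s z)"] by simp
  have I2s: "I2 = (\<Sum>z\<in>Zs. qf (V z) (a z - b z) * Pz z)"
    unfolding I2_def a_def b_def using intZ[of "\<lambda>z. qf (V z) (\<beta> t z - \<beta> s z)"] by simp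
  have I3s: "I3 = (\<Sum>z\<in>Zs. qf (V z) (a z - bb z) * Pz z)"
    unfolding I3_def a_def using intZ[of "\<lambda>z. qf (V z) (\<beta> t z - bb z)"] by simp
  have I4s: "I4 = (\<Sum>z\<in>Zs. qf (V z) (b z - bb z) * Pz z)"
    unfolding I4_def b_def using intZ[of "\<lambda>z. qf (V z) (\<beta> s z - bb z)"] by simp
  define k where "k = 1 / (p + q) - 1"
  have DU: "\<sigma>U - \<sigma>A = I1 / (p * q * (p + q)) + I2 * k"
  proof -
    have "\<sigma>U - \<sigma>A = (\<Sum>z\<in>Zs. ((vY t z / p + vY s z / q)
      - ((cvar M Z z (\<lambda>\<omega>. YV \<omega> $ t - X \<omega> \<bullet> a z) / p + cvar M Z z (\<lambda>\<omega>. YV \<omega> $ s - X \<omega> \<bullet> b z) / q)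
         + qf (V z) (a z - b z))) * Pz z)"
      unfolding eU eA by (rule sum_sub)
    also have "\<dots> = (\<Sum>z\<in>Zs. (qf (V z) (q *\<^sub>R a z + p *\<^sub>R b z) / (p * q * (p + q)) + qf (V z) (a z - b z) * k) * Pz z)"
      unfolding k_def by (rule sum.cong[OF refl]) (simp add: ptU)
    finally show ?thesis unfolding sum_lin2 I1s I2s .
  qed
  have DB1: "\<sigma>B - \<sigma>A = I3 / p + I4 / q - I2"
  proof -
    have "\<sigma>B - \<sigma>A = (\<Sum>z\<in>Zs. ((cvar M Z z (\<lambda>\<omega>. YV \<omega> $ t - X \<omega> \<bullet> bb z) / p + cvar M Z z (\<lambda>\<omega>. YV \<omega> $ s - X \<omega> \<bullet> bb z) / q)
      - ((cvar M Z z (\<lambda>\<omega>. YV \<omega> $ t - X \<omega> \<bullet> a z) / p + cvar M Z z (\<lambda>\<omega>. YV \<omega> $ s - X \<omega> \<bullet> b z) / q)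
         + qf (V z) (a z - b z))) * Pz z)"
      unfolding eB eA by (rule sum_sub)
    also have "\<dots> = (\<Sum>z\<in>Zs. (qf (V z) (a z - bb z) / p + qf (V z) (b z - bb z) / q - qf (V z) (a z - b z)) * Pz z)"
      by (rule sum.cong[OF refl]) (simp add: ptB1)
    finally show ?thesis unfolding sum_lin3 I3s I4s I2s .
  qed
  have DB2: "\<sigma>B - \<sigma>A = I5 / (p * q * (p + q)) + I2 * k"
  proof -
    have "I3 / p + I4 / q - I2 = (\<Sum>z\<in>Zs. (qf (V z) (a z - bb z) / p + qf (V z) (b z - bb z) / q - qf (V z) (a z - b z)) * Pz z)"
      unfolding sum_lin3 I3s I4s I2s ..
    also have "\<dots> = (\<Sum>z\<in>Zs. (H5 z / (p * q * (p + q)) + qf (V z) (a z - b z) * k) * Pz z)"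
      unfolding k_def H5_def by (rule sum.cong[OF refl]) (simp add: ptB2)
    finally show ?thesis unfolding DB1 sum_lin2 I5_def I2s .
  qed
  have pq1: "p + q \<le> 1"
  proof -
    have "p + q = (\<Sum>l\<in>{t, s}. \<pi> l)" unfolding p_def q_def using st by simp
    also have "\<dots> \<le> (\<Sum>l\<in>UNIV. \<pi> l)" by (rule sum_mono2) (auto intro: less_imp_le pi_pos)
    finally show ?thesis using pi_sum by simp
  qed
  have D0: "p * q * (p + q) > 0" using p0 q0 by simp
  have k0: "k \<ge> 0" unfolding k_def using p0 q0 pq1 by (simp add: field_simps)
  have kz: "k = 0 \<longleftrightarrow> 1 - p - q = 0" unfolding k_def using p0 q0 by (auto simp: field_simps)
  have nnq: "qf (V z) v \<ge> 0" if "z \<in> Zs" for z v using posdef_qf(1)[OF posdef[OF that]] .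
  have zq: "qf (V z) v = 0 \<longleftrightarrow> v = 0" if "z \<in> Zs" for z v using posdef_qf(2)[OF posdef[OF that]] .
  have S1: "I1 \<ge> 0" "I1 = 0 \<longleftrightarrow> (\<forall>z\<in>Zs. q *\<^sub>R a z + p *\<^sub>R b z = 0)"
    unfolding I1s using sum_zero_iff[OF C3_fin Ppos nnq] zq by auto
  have S2: "I2 \<ge> 0" "I2 = 0 \<longleftrightarrow> (\<forall>z\<in>Zs. a z - b z = 0)"
    unfolding I2s using sum_zero_iff[OF C3_fin Ppos nnq] zq by auto
  have S5a: "I5 \<ge> 0" "I5 = 0 \<longleftrightarrow> (\<forall>z\<in>Zs. q *\<^sub>R a z + p *\<^sub>R b z + (- (p + q)) *\<^sub>R bb z = 0)"
    unfolding I5_def H5_def using sum_zero_iff[OF C3_fin Ppos nnq] zq by auto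
  have S5: "I5 \<ge> 0" "I5 = 0 \<longleftrightarrow> (\<forall>z\<in>Zs. bb z = (1 / (p + q)) *\<^sub>R (q *\<^sub>R a z + p *\<^sub>R b z))"
    using S5a unfolding vec_solve[of "p + q", OF add_pos_pos[OF p0 q0]] by auto
  have sc: "(1 - p - q) *\<^sub>R (a z - b z) = 0 \<longleftrightarrow> 1 - p - q = 0 \<or> a z - b z = 0" for z by simp
  have part3: "\<sigma>A \<le> \<sigma>U \<and> (\<sigma>A = \<sigma>U \<longleftrightarrow> (\<forall>z\<in>Zs. \<pi> s *\<^sub>R \<beta> t z + \<pi> t *\<^sub>R \<beta> s z = 0
                               \<and> (1 - \<pi> t - \<pi> s) *\<^sub>R (\<beta> t z - \<beta> s z) = 0))"
  proof -
    have f: "\<sigma>U - \<sigma>A \<ge> 0" "\<sigma>U - \<sigma>A = 0 \<longleftrightarrow> I1 = 0 \<and> (k = 0 \<or> I2 = 0)"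
      unfolding DU using final_logic[OF S1(1) S2(1) D0 k0] by auto
    have "\<sigma>A = \<sigma>U \<longleftrightarrow> (\<forall>z\<in>Zs. q *\<^sub>R a z + p *\<^sub>R b z = 0) \<and> (1 - p - q = 0 \<or> (\<forall>z\<in>Zs. a z - b z = 0))"
      using f(2) S1(2) S2(2) kz by auto
    also have "\<dots> \<longleftrightarrow> (\<forall>z\<in>Zs. q *\<^sub>R a z + p *\<^sub>R b z = 0 \<and> (1 - p - q) *\<^sub>R (a z - b z) = 0)"
      unfolding sc by blast
    finally show ?thesis using f(1) unfolding p_def q_def a_def b_def by simp
  qed
  have part4: "\<sigma>A \<le> \<sigma>B \<and> (\<sigma>A = \<sigma>B \<longleftrightarrow> (\<forall>z\<in>Zs. bb z = (1 / (\<pi> s + \<pi> t)) *\<^sub>R (\<pi> s *\<^sub>R \<beta> t z + \<pi> t *\<^sub>R \<beta> s z)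
                               \<and> (1 - \<pi> t - \<pi> s) *\<^sub>R (\<beta> t z - \<beta> s z) = 0))"
  proof -
    have f: "\<sigma>B - \<sigma>A \<ge> 0" "\<sigma>B - \<sigma>A = 0 \<longleftrightarrow> I5 = 0 \<and> (k = 0 \<or> I2 = 0)"
      unfolding DB2 using final_logic[OF S5(1) S2(1) D0 k0] by auto
    have "\<sigma>A = \<sigma>B \<longleftrightarrow> (\<forall>z\<in>Zs. bb z = (1 / (p + q)) *\<^sub>R (q *\<^sub>R a z + p *\<^sub>R b z)) \<and> (1 - p - q = 0 \<or> (\<forall>z\<in>Zs. a z - b z = 0))"
      using f(2) S5(2) S2(2) kz by auto
    also have "\<dots> \<longleftrightarrow> (\<forall>z\<in>Zs. bb z = (1 / (p + q)) *\<^sub>R (q *\<^sub>R a z + p *\<^sub>R b z) \<and> (1 - p - q) *\<^sub>R (a z - b z) = 0)"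
      unfolding sc by blast
    finally show ?thesis using f(1) unfolding p_def q_def a_def b_def by (simp add: add.commute)
  qed
  show ?thesis
    using DU DB1 part3 part4 unfolding I1_def I2_def I3_def I4_def k_def p_def q_def by simp
qed


end
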